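(* For any $p$-regular multigraph $G$ and any $T\in\mathrm{Sym}^p(\mathbb{R}^n)$, $\mathbb{E}_{W\sim\mathrm{Wig}}\, m^c_G(T+W)=m^!_G(T)$.
   Context: $\mathrm{Sym}^p(\mathbb{R}^n)$ is the space of real symmetric $p$-ary tensors of dimension $n$; $T_S$ denotes the entry indexed by a multiset $S$ of size $p$. $\mathrm{Wig}$ is the law of $W$ with $W_{i_1,\dots,i_p}=\frac{1}{\sqrt{p!}}\sum_{\pi\in S_p}G_{i_{\pi(1)},\dots,i_{\pi(p)}}$, $G$ with i.i.d. $\mathcal{N}(0,1)$ entries. Multigraphs $G=(V,E)$ may have loops and parallel edges (loop contributes 2 to degree). For $i\in[n]^E$, $i(\partial v)$ is the multiset of labels of edges at $v$ (loops counted twice). With $b=|E|$, $m^!_G(T)=\sum_{i\in[n]^E,\ i_1,\dots,i_b\text{ distinct}}\prod_{v\in V}T_{i(\partial v)}$ (equal to $1$ for the empty graph). A Frobenius pair is a connected component consisting of two vertices joined by $p$ parallel edges; with $U$ the set of vertices in Frobenius pairs and $i(\pi)$ the multiset of edge labels of a pair $\pi$, $m^c_G(T)=\sum_{i\text{ distinct}}\big[\prod_{v\in V\setminus U}T_{i(\partial v)}\prod_\pi(T_{i(\pi)}^2-1)\big]$, the product over Frobenius pairs $\pi$. *)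

theory Defs
  imports "HOL-Probability.Probability" "HOL-Library.Multiset" "HOL-Combinatorics.Permutations"
begin

text \<open>A symmetric p-ary tensor of dimension n is represented as a function
  T :: nat multiset => real; only its values on multisets of size p with
  elements in {0..<n} are ever used.\<close>

definition tuples :: "nat \<Rightarrow> nat \<Rightarrow> (nat \<Rightarrow> nat) set" where
  "tuples p n = {..<p} \<rightarrow>\<^sub>E {..<n}"

definition gauss_space :: "nat \<Rightarrow> nat \<Rightarrow> ((nat \<Rightarrow> nat) \<Rightarrow> real) measure" where
  "gauss_space p n = PiM (tuples p n) (\<lambda>_. density lborel std_normal_density)"

text \<open>The Wigner tensor W built from G: W_{i_1..i_p} = (1/sqrt p!) sum over permutations
  of G_{i_pi(1)..i_pi(p)}; the entry at multiset S is computed from the sorted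
  representative sequence of S.\<close>
definition wig :: "nat \<Rightarrow> ((nat \<Rightarrow> nat) \<Rightarrow> real) \<Rightarrow> nat multiset \<Rightarrow> real" where
  "wig p G S = (1 / sqrt (fact p)) *
     (\<Sum>\<pi> | \<pi> permutes {..<p}. G (restrict (\<lambda>k. sorted_list_of_multiset S ! (\<pi> k)) {..<p}))"

text \<open>A multigraph with vertex set {0..<nv} and edge set {0..<b}; edge e has
  endpoints ends e (a loop if both are equal).\<close>

definition inc :: "(nat \<Rightarrow> nat \<times> nat) \<Rightarrow> nat \<Rightarrow> nat \<Rightarrow> nat" where
  "inc ends e v = (if fst (ends e) = v then 1 else 0) + (if snd (ends e) = v then 1 else 0)"

definition multigraph :: "nat \<Rightarrow> nat \<Rightarrow> (nat \<Rightarrow> nat \<times> nat) \<Rightarrow> bool" where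
  "multigraph nv b ends = (\<forall>e<b. fst (ends e) < nv \<and> snd (ends e) < nv)"

definition regular :: "nat \<Rightarrow> nat \<Rightarrow> nat \<Rightarrow> (nat \<Rightarrow> nat \<times> nat) \<Rightarrow> bool" where
  "regular p nv b ends = (\<forall>v<nv. (\<Sum>e<b. inc ends e v) = p)"

text \<open>i(\<partial>v): multiset of labels of edges at v (loops counted twice).\<close>
definition star_labels :: "nat \<Rightarrow> (nat \<Rightarrow> nat \<times> nat) \<Rightarrow> (nat \<Rightarrow> nat) \<Rightarrow> nat \<Rightarrow> nat multiset" where
  "star_labels b ends i v = (\<Sum>e<b. replicate_mset (inc ends e v) (i e))"

definition dist_labelings :: "nat \<Rightarrow> nat \<Rightarrow> (nat \<Rightarrow> nat) set" where
  "dist_labelings n b = {i \<in> {..<b} \<rightarrow>\<^sub>E {..<n}. inj_on i {..<b}}"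

definition m_inj :: "nat \<Rightarrow> nat \<Rightarrow> nat \<Rightarrow> (nat \<Rightarrow> nat \<times> nat) \<Rightarrow> (nat multiset \<Rightarrow> real) \<Rightarrow> real" where
  "m_inj n nv b ends T = (\<Sum>i\<in>dist_labelings n b. \<Prod>v<nv. T (star_labels b ends i v))"

text \<open>{u,v} is a Frobenius pair: a connected component consisting of the two
  distinct vertices u, v joined by p parallel edges (every edge at u or v joins u and v,
  and there are exactly p of them).\<close>
definition frob_pair :: "nat \<Rightarrow> nat \<Rightarrow> nat \<Rightarrow> (nat \<Rightarrow> nat \<times> nat) \<Rightarrow> nat \<Rightarrow> nat \<Rightarrow> bool" where
  "frob_pair p nv b ends u v =
     (u \<noteq> v \<and> u < nv \<and> v < nv \<and>
      (\<forall>e<b. (inc ends e u > 0 \<or> inc ends e v > 0) \<longrightarrow> ends e = (u, v) \<or> ends e = (v, u)) \<and>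
      card {e. e < b \<and> (ends e = (u, v) \<or> ends e = (v, u))} = p)"

definition frob_pairs :: "nat \<Rightarrow> nat \<Rightarrow> nat \<Rightarrow> (nat \<Rightarrow> nat \<times> nat) \<Rightarrow> nat set set" where
  "frob_pairs p nv b ends = {{u, v} | u v. frob_pair p nv b ends u v}"

definition frob_vertices :: "nat \<Rightarrow> nat \<Rightarrow> nat \<Rightarrow> (nat \<Rightarrow> nat \<times> nat) \<Rightarrow> nat set" where
  "frob_vertices p nv b ends = \<Union> (frob_pairs p nv b ends)"

definition pair_labels :: "nat \<Rightarrow> (nat \<Rightarrow> nat \<times> nat) \<Rightarrow> (nat \<Rightarrow> nat) \<Rightarrow> nat set \<Rightarrow> nat multiset" where
  "pair_labels b ends i P = image_mset i (mset_set {e. e < b \<and> fst (ends e) \<in> P \<and> snd (ends e) \<in> P})"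

definition m_c :: "nat \<Rightarrow> nat \<Rightarrow> nat \<Rightarrow> nat \<Rightarrow> (nat \<Rightarrow> nat \<times> nat) \<Rightarrow> (nat multiset \<Rightarrow> real) \<Rightarrow> real" where
  "m_c p n nv b ends T = (\<Sum>i\<in>dist_labelings n b.
      (\<Prod>v\<in>{..<nv} - frob_vertices p nv b ends. T (star_labels b ends i v)) *
      (\<Prod>P\<in>frob_pairs p nv b ends. (T (pair_labels b ends i P))\<^sup>2 - 1))"

end

theory Submission
  imports Defs
begin

abbreviation gd :: "real measure" where "gd \<equiv> density lborel std_normal_density"

lemma gd_prob: "prob_space gd"
  using prob_space_normal_density[of 1 0] by simp

lemma sets_gd: "sets gd = sets borel" by simp
lemma space_gd[simp]: "space gd = UNIV" by simp

lemma coord_meas: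
  "t \<in> I \<Longrightarrow> (\<lambda>G. G t) \<in> borel_measurable (PiM I (\<lambda>_. gd))"
  by (subst measurable_cong_sets[OF refl sets_gd[symmetric]]) (rule measurable_component_singleton)

lemma gd_integrable_pow: "integrable gd (\<lambda>x. x ^ k)"
  by (subst integrable_density) (auto simp: integrable_std_normal_moment)

lemma gd_integral_x: "(\<integral>x. x \<partial>gd) = 0"
  using integral_std_normal_moment_odd[of 0] by (subst integral_density) auto

lemma gd_integral_x2: "(\<integral>x. x^2 \<partial>gd) = 1"
  using integral_std_normal_moment_even[of 1] by (subst integral_density) auto

lemma prob_PiM_gd: "prob_space (PiM I (\<lambda>_. gd))"
  by (rule prob_space_PiM) (rule gd_prob)

lemma distr_comp_gd: "t \<in> I \<Longrightarrow> distr (PiM I (\<lambda>_. gd)) gd (\<lambda>G. G t) = gd"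
  by (rule distr_PiM_component) (auto intro: gd_prob)

lemma coord_integrable_pow:
  assumes "t \<in> I" shows "integrable (PiM I (\<lambda>_. gd)) (\<lambda>G. G t ^ k)"
proof -
  have "integrable (distr (PiM I (\<lambda>_. gd)) gd (\<lambda>G. G t)) (\<lambda>x. x ^ k)"
    using distr_comp_gd[OF assms] gd_integrable_pow by simp
  then show ?thesis
    by (subst (asm) integrable_distr_eq) (auto intro: coord_meas assms)
qed

lemma coord_integral_pow:
  assumes "t \<in> I" shows "(\<integral>G. G t ^ k \<partial>PiM I (\<lambda>_. gd)) = (\<integral>x. x ^ k \<partial>gd)"
proof -
  have "(\<integral>G. G t ^ k \<partial>PiM I (\<lambda>_. gd)) = (\<integral>x. x ^ k \<partial>distr (PiM I (\<lambda>_. gd)) gd (\<lambda>G. G t))"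
    by (subst integral_distr) (auto intro: coord_meas assms)
  then show ?thesis using distr_comp_gd[OF assms] by simp
qed

lemma coord_indep:
  "prob_space.indep_vars (PiM I (\<lambda>_. gd)) (\<lambda>_. gd) (\<lambda>t G. G t) I"
proof (cases "I = {}")
  case True
  then show ?thesis
    by (simp add: prob_space.indep_vars_def[OF prob_PiM_gd] prob_space.indep_sets_def[OF prob_PiM_gd])
next
  case False
  interpret P: prob_space "PiM I (\<lambda>_. gd)" by (rule prob_PiM_gd)
  have "distr (PiM I (\<lambda>_. gd)) (PiM I (\<lambda>_. gd)) (\<lambda>x. restrict (\<lambda>i. x i) I) = distr (PiM I (\<lambda>_. gd)) (PiM I (\<lambda>_. gd)) (\<lambda>x. x)"
    by (rule distr_cong) (auto simp: space_PiM PiE_def extensional_restrict)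
  also have "\<dots> = PiM I (\<lambda>_. gd)" by (rule distr_id)
  also have "\<dots> = PiM I (\<lambda>i. distr (PiM I (\<lambda>_. gd)) gd (\<lambda>x. x i))"
    by (intro PiM_cong refl distr_comp_gd[symmetric]) auto
  finally have eq: "distr (PiM I (\<lambda>_. gd)) (PiM I (\<lambda>_. gd)) (\<lambda>x. restrict (\<lambda>i. x i) I) =
      PiM I (\<lambda>i. distr (PiM I (\<lambda>_. gd)) gd (\<lambda>x. x i))" .
  show ?thesis
    apply (rule P.indep_vars_iff_distr_eq_PiM'[OF False, THEN iffD2])
     apply (rule measurable_component_singleton, assumption)
    apply (rule eq)
    done
qed

lemma size_sum_mset_gen: "size (\<Sum>e\<in>A. (f e :: 'a multiset)) = (\<Sum>e\<in>A. size (f e))"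
  by (induct A rule: infinite_finite_induct) simp_all

lemma sum_single_mset: "finite A \<Longrightarrow> (\<Sum>e\<in>A. {#f e#}) = image_mset f (mset_set A)"
  by (induct A rule: finite_induct) simp_all

lemma count_star:
  assumes "inj_on i {..<b}" "e < b"
  shows "count (star_labels b ends i v) (i e) = inc ends e v"
proof -
  have "count (star_labels b ends i v) (i e) = (\<Sum>e'<b. if e' = e then inc ends e' v else 0)"
    unfolding star_labels_def count_sum
  proof (intro sum.cong refl)
    fix e' assume "e' \<in> {..<b}"
    then have "i e' = i e \<longleftrightarrow> e' = e" using assms inj_onD[OF assms(1)] by auto
    then show "count (replicate_mset (inc ends e' v) (i e')) (i e) = (if e' = e then inc ends e' v else 0)"
      by (auto simp: count_replicate_mset)
  qed
  also have "\<dots> = inc ends e v" using assms(2) by simp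
  finally show ?thesis .
qed

lemma star_eq_inc:
  assumes "inj_on i {..<b}" "star_labels b ends i u = star_labels b ends i v" "e < b"
  shows "inc ends e u = inc ends e v"
  using count_star[OF assms(1,3), of ends u] count_star[OF assms(1,3), of ends v] assms(2) by simp

lemma frob_of_inc:
  assumes "u \<noteq> v" "u < nv" "v < nv" "regular p nv b ends" "\<forall>e<b. inc ends e u = inc ends e v"
  shows "frob_pair p nv b ends u v"
proof -
  have edge: "ends e = (u, v) \<or> ends e = (v, u)" if "e < b" "inc ends e u > 0 \<or> inc ends e v > 0" for e
  proof -
    have "inc ends e u > 0" "inc ends e v > 0" using that assms(5) by auto
    then show ?thesis using assms(1) by (cases "ends e") (auto simp: inc_def split: if_splits)
  qed
  have ind: "inc ends e u = (if ends e = (u, v) \<or> ends e = (v, u) then 1 else 0)" if "e < b" for e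
  proof (cases "inc ends e u > 0")
    case True
    then have "ends e = (u, v) \<or> ends e = (v, u)" using edge that by auto
    then show ?thesis using assms(1) by (elim disjE) (simp_all add: inc_def)
  next
    case False
    have "\<not> (ends e = (u, v) \<or> ends e = (v, u))"
    proof
      assume "ends e = (u, v) \<or> ends e = (v, u)"
      then have "inc ends e u > 0" by (elim disjE) (simp_all add: inc_def)
      then show False using False by simp
    qed
    then show ?thesis using False by simp
  qed
  have "p = (\<Sum>e<b. inc ends e u)" using assms(2,4) by (simp add: regular_def)
  also have "\<dots> = (\<Sum>e<b. if ends e = (u, v) \<or> ends e = (v, u) then 1 else 0)"
    by (rule sum.cong) (auto simp: ind)
  also have "\<dots> = card ({..<b} \<inter> {e. ends e = (u, v) \<or> ends e = (v, u)})"
    by (simp add: sum.If_cases)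
  also have "{..<b} \<inter> {e. ends e = (u, v) \<or> ends e = (v, u)} = {e. e < b \<and> (ends e = (u, v) \<or> ends e = (v, u))}"
    by auto
  finally show ?thesis using assms(1,2,3) edge unfolding frob_pair_def by auto
qed

lemma frob_inc:
  assumes "frob_pair p nv b ends u v" "e < b"
  shows "inc ends e u = inc ends e v"
proof (cases "inc ends e u > 0 \<or> inc ends e v > 0")
  case True
  then have "ends e = (u, v) \<or> ends e = (v, u)" using assms unfolding frob_pair_def by auto
  moreover have "u \<noteq> v" using assms(1) unfolding frob_pair_def by auto
  ultimately show ?thesis by (elim disjE) (simp_all add: inc_def)
next
  case False
  then show ?thesis by auto
qed

lemma frob_sym:
  assumes "frob_pair p nv b ends u v" shows "frob_pair p nv b ends v u"
proof -
  have "{e. e < b \<and> (ends e = (v, u) \<or> ends e = (u, v))} = {e. e < b \<and> (ends e = (u, v) \<or> ends e = (v, u))}"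
    by auto
  then show ?thesis using assms unfolding frob_pair_def by auto
qed

lemma frob_unique:
  assumes "p \<ge> 1" "frob_pair p nv b ends u v" "frob_pair p nv b ends u w"
  shows "v = w"
proof -
  have "card {e. e < b \<and> (ends e = (u, v) \<or> ends e = (v, u))} \<ge> 1"
    using assms(1,2) unfolding frob_pair_def by auto
  then have "{e. e < b \<and> (ends e = (u, v) \<or> ends e = (v, u))} \<noteq> {}"
    by (intro notI) simp
  then obtain e where e: "e < b" "ends e = (u, v) \<or> ends e = (v, u)"
    by blast
  then have "inc ends e u > 0" by (auto simp: inc_def)
  then have "ends e = (u, w) \<or> ends e = (w, u)" using assms(3) e(1) unfolding frob_pair_def by auto
  then show ?thesis using e assms(2) unfolding frob_pair_def by auto
qed

lemma frob_pairs_mem: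
  assumes "p \<ge> 1" "P \<in> frob_pairs p nv b ends" "x \<in> P"
  shows "\<exists>y. P = {x, y} \<and> frob_pair p nv b ends x y"
proof -
  obtain u v where "P = {u, v}" "frob_pair p nv b ends u v"
    using assms(2) unfolding frob_pairs_def by auto
  note uv = this
  show ?thesis
  proof (cases "x = u")
    case True
    then show ?thesis using uv by blast
  next
    case False
    then have "x = v" using assms(3) uv(1) by auto
    then show ?thesis using uv frob_sym[OF uv(2)] by (auto simp: insert_commute)
  qed
qed

lemma frob_pairs_disj:
  assumes "p \<ge> 1" "P \<in> frob_pairs p nv b ends" "Q \<in> frob_pairs p nv b ends" "x \<in> P" "x \<in> Q"
  shows "P = Q"
proof -
  obtain y where y: "P = {x, y}" "frob_pair p nv b ends x y" using frob_pairs_mem[OF assms(1,2,4)] by auto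
  obtain y' where y': "Q = {x, y'}" "frob_pair p nv b ends x y'" using frob_pairs_mem[OF assms(1,3,5)] by auto
  have "y = y'" by (rule frob_unique[OF assms(1) y(2) y'(2)])
  then show ?thesis using y y' by simp
qed

lemma frob_pairI:
  "frob_pair p nv b ends u v \<Longrightarrow> {u, v} \<in> frob_pairs p nv b ends"
  unfolding frob_pairs_def by auto

lemma frob_vertices_sub: "frob_vertices p nv b ends \<subseteq> {..<nv}"
  unfolding frob_vertices_def frob_pairs_def frob_pair_def by auto

lemma finite_frob_pairs: "finite (frob_pairs p nv b ends)"
proof -
  have "frob_pairs p nv b ends \<subseteq> Pow {..<nv}"
    unfolding frob_pairs_def frob_pair_def by auto
  then show ?thesis by (rule finite_subset) simp
qed

lemma star_eq_frob:
  assumes "frob_pair p nv b ends u v"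
  shows "star_labels b ends i u = star_labels b ends i v"
  unfolding star_labels_def using frob_inc[OF assms] by (intro sum.cong) auto

lemma pair_labels_eq:
  assumes "frob_pair p nv b ends u v"
  shows "pair_labels b ends i {u, v} = star_labels b ends i u"
proof -
  define E where "E = {e. e < b \<and> (ends e = (u, v) \<or> ends e = (v, u))}"
  have uv: "u \<noteq> v" using assms unfolding frob_pair_def by auto
  have inc_u: "inc ends e u > 0 \<Longrightarrow> e < b \<Longrightarrow> e \<in> E" for e
    using assms unfolding frob_pair_def E_def by auto
  have set_eq: "{e. e < b \<and> fst (ends e) \<in> {u, v} \<and> snd (ends e) \<in> {u, v}} = E"
  proof (rule set_eqI, rule iffI)
    fix e assume "e \<in> {e. e < b \<and> fst (ends e) \<in> {u, v} \<and> snd (ends e) \<in> {u, v}}"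
    then have "e < b" "fst (ends e) \<in> {u, v}" "snd (ends e) \<in> {u, v}" by auto
    then have "inc ends e u > 0 \<or> inc ends e v > 0" by (auto simp: inc_def)
    then show "e \<in> E" using assms \<open>e < b\<close> unfolding frob_pair_def E_def by auto
  next
    fix e assume "e \<in> E" then show "e \<in> {e. e < b \<and> fst (ends e) \<in> {u, v} \<and> snd (ends e) \<in> {u, v}}"
      by (auto simp: E_def)
  qed
  have "star_labels b ends i u = (\<Sum>e<b. if e \<in> E then {#i e#} else {#})"
    unfolding star_labels_def
  proof (intro sum.cong refl)
    fix e assume e: "e \<in> {..<b}"
    show "replicate_mset (inc ends e u) (i e) = (if e \<in> E then {#i e#} else {#})"
    proof (cases "e \<in> E")
      case True
      then have "ends e = (u, v) \<or> ends e = (v, u)" by (simp add: E_def)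
      then show ?thesis using uv True by (elim disjE) (simp_all add: inc_def)
    next
      case False
      then have "inc ends e u = 0" using inc_u e by auto
      then show ?thesis using False by simp
    qed
  qed
  also have "\<dots> = (\<Sum>e\<in>E. {#i e#})"
    by (simp add: sum.If_cases E_def Int_def)
  also have "\<dots> = image_mset i (mset_set E)"
    by (rule sum_single_mset) (simp add: E_def)
  finally show ?thesis unfolding pair_labels_def set_eq by simp
qed

lemma size_star:
  assumes "regular p nv b ends" "v < nv"
  shows "size (star_labels b ends i v) = p"
  using assms unfolding star_labels_def regular_def by (simp add: size_sum_mset_gen)

lemma set_star:
  assumes "i \<in> {..<b} \<rightarrow>\<^sub>E {..<n}" "x \<in># star_labels b ends i v"
  shows "x < n"
proof -
  have "x \<in> (\<Union>e\<in>{..<b}. set_mset (replicate_mset (inc ends e v) (i e)))"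
    using assms(2) unfolding star_labels_def by (simp add: set_mset_sum)
  then obtain e where "e < b" "x = i e" by (auto split: if_splits)
  then show ?thesis using assms(1) by auto
qed

definition tup :: "nat \<Rightarrow> nat multiset \<Rightarrow> (nat \<Rightarrow> nat) \<Rightarrow> (nat \<Rightarrow> nat)" where
  "tup p S \<pi> = restrict (\<lambda>k. sorted_list_of_multiset S ! \<pi> k) {..<p}"

definition tupset :: "nat \<Rightarrow> nat multiset \<Rightarrow> (nat \<Rightarrow> nat) set" where
  "tupset p S = tup p S ` {\<pi>. \<pi> permutes {..<p}}"

lemma wig_tup: "wig p G S = (1 / sqrt (fact p)) * (\<Sum>\<pi> | \<pi> permutes {..<p}. G (tup p S \<pi>))"
  by (simp add: wig_def tup_def)

lemma wig_restrict:
  assumes "tupset p S \<subseteq> J"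
  shows "wig p (restrict G J) S = wig p G S"
proof -
  have "(\<Sum>\<pi> | \<pi> permutes {..<p}. restrict G J (tup p S \<pi>)) = (\<Sum>\<pi> | \<pi> permutes {..<p}. G (tup p S \<pi>))"
    using assms by (intro sum.cong refl) (auto simp: tupset_def)
  then show ?thesis by (simp add: wig_tup)
qed

lemma length_sorted_mset: "length (sorted_list_of_multiset S) = size S"
  by (metis mset_sorted_list_of_multiset size_mset)

lemma tup_in:
  assumes "size S = p" "set_mset S \<subseteq> {..<n}" "\<pi> permutes {..<p}"
  shows "tup p S \<pi> \<in> tuples p n"
proof -
  have "sorted_list_of_multiset S ! \<pi> k < n" if "k < p" for k
  proof -
    have "\<pi> k < p" using permutes_in_image[OF assms(3)] that by auto
    then have "sorted_list_of_multiset S ! \<pi> k \<in> set (sorted_list_of_multiset S)"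
      using assms(1) nth_mem[of "\<pi> k" "sorted_list_of_multiset S"] by (simp add: length_sorted_mset)
    then show ?thesis using assms(2) by auto
  qed
  then show ?thesis unfolding tuples_def tup_def by auto
qed

lemma tupset_sub:
  assumes "size S = p" "set_mset S \<subseteq> {..<n}"
  shows "tupset p S \<subseteq> tuples p n"
  using tup_in[OF assms] unfolding tupset_def by auto

lemma tup_mset:
  assumes "size S = p" "\<pi> permutes {..<p}"
  shows "image_mset (tup p S \<pi>) (mset_set {..<p}) = S"
proof -
  define xs where "xs = sorted_list_of_multiset S"
  have len: "length xs = p" using assms(1) by (simp add: xs_def length_sorted_mset)
  have "image_mset (tup p S \<pi>) (mset_set {..<p}) = image_mset (\<lambda>k. xs ! \<pi> k) (mset_set {..<p})"
    by (intro image_mset_cong) (auto simp: tup_def xs_def)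
  also have "\<dots> = image_mset (\<lambda>k. xs ! k) (image_mset \<pi> (mset_set {..<p}))"
    by (simp add: multiset.map_comp comp_def)
  also have "\<dots> = image_mset (\<lambda>k. xs ! k) (mset_set {..<p})"
    by (simp add: permutes_image_mset[OF assms(2)])
  also have "\<dots> = mset (map (\<lambda>k. xs ! k) [0..<length xs])"
    by (simp add: len atLeast0LessThan)
  also have "\<dots> = mset xs" by (simp add: map_nth)
  also have "\<dots> = S" by (simp add: xs_def)
  finally show ?thesis .
qed

lemma tupset_disj:
  assumes "size S = p" "size S' = p" "S \<noteq> S'"
  shows "tupset p S \<inter> tupset p S' = {}"
proof (rule ccontr)
  assume "tupset p S \<inter> tupset p S' \<noteq> {}"
  then obtain \<pi> \<sigma> where "\<pi> permutes {..<p}" "\<sigma> permutes {..<p}" "tup p S \<pi> = tup p S' \<sigma>"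
    unfolding tupset_def by auto
  then have "S = S'" using tup_mset[OF assms(1), of \<pi>] tup_mset[OF assms(2), of \<sigma>] by simp
  then show False using assms(3) by simp
qed

lemma tup_inj:
  assumes "size S = p" "distinct (sorted_list_of_multiset S)" "\<pi> permutes {..<p}" "\<sigma> permutes {..<p}"
    "tup p S \<pi> = tup p S \<sigma>"
  shows "\<pi> = \<sigma>"
proof
  fix k
  show "\<pi> k = \<sigma> k"
  proof (cases "k < p")
    case True
    have "\<pi> k < p" "\<sigma> k < p" using permutes_in_image[OF assms(3)] permutes_in_image[OF assms(4)] True by auto
    moreover have "sorted_list_of_multiset S ! \<pi> k = sorted_list_of_multiset S ! \<sigma> k"
      using fun_cong[OF assms(5), of k] True by (simp add: tup_def)
    ultimately show ?thesis using assms(1,2) nth_eq_iff_index_eq[OF assms(2)] by (simp add: length_sorted_mset)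
  next
    case False
    then show ?thesis using permutes_not_in[OF assms(3)] permutes_not_in[OF assms(4)] by simp
  qed
qed

lemma wig_meas: "(\<lambda>H. wig p H S) \<in> borel_measurable (PiM (tupset p S) (\<lambda>_. gd))"
  unfolding wig_tup
  by (intro borel_measurable_times borel_measurable_const borel_measurable_sum coord_meas)
     (auto simp: tupset_def)

lemma coord_indep_borel:
  "prob_space.indep_vars (PiM I (\<lambda>_. gd)) (\<lambda>_. borel) (\<lambda>t G. G t) I"
proof -
  interpret P: prob_space "PiM I (\<lambda>_. gd)" by (rule prob_PiM_gd)
  have "P.indep_vars (\<lambda>_. borel) (\<lambda>t G. (\<lambda>x. x) (G t)) I"
    by (rule P.indep_vars_compose2[OF coord_indep]) (simp add: measurable_ident_sets)
  then show ?thesis by simp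
qed

lemma coord_prod:
  assumes "s \<in> I" "t \<in> I"
  shows "integrable (PiM I (\<lambda>_. gd)) (\<lambda>G. G s * G t) \<and>
         (\<integral>G. G s * G t \<partial>PiM I (\<lambda>_. gd)) = (if s = t then 1 else 0)"
proof (cases "s = t")
  case True
  then show ?thesis
    using coord_integrable_pow[OF assms(1), of 2] coord_integral_pow[OF assms(1), of 2] gd_integral_x2
    by (simp add: power2_eq_square)
next
  case False
  interpret P: prob_space "PiM I (\<lambda>_. gd)" by (rule prob_PiM_gd)
  have ind: "P.indep_vars (\<lambda>_. borel) (\<lambda>t G. G t) {s, t}"
    by (rule P.indep_vars_subset[OF coord_indep_borel]) (use assms in auto)
  have int: "\<And>j. j \<in> {s, t} \<Longrightarrow> integrable (PiM I (\<lambda>_. gd)) (\<lambda>G. G j)"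
    using coord_integrable_pow[of _ I 1] assms by auto
  have "integrable (PiM I (\<lambda>_. gd)) (\<lambda>G. \<Prod>j\<in>{s, t}. G j)"
    by (rule P.indep_vars_integrable[OF _ ind int]) auto
  moreover have "(\<integral>G. (\<Prod>j\<in>{s, t}. G j) \<partial>PiM I (\<lambda>_. gd)) = (\<Prod>j\<in>{s, t}. (\<integral>G. G j \<partial>PiM I (\<lambda>_. gd)))"
    by (rule P.indep_vars_lebesgue_integral[OF _ ind int]) auto
  moreover have "(\<integral>G. G j \<partial>PiM I (\<lambda>_. gd)) = 0" if "j \<in> I" for j
    using coord_integral_pow[OF that, of 1] gd_integral_x by simp
  ultimately show ?thesis using False assms by simp
qed

lemma wig_int:
  assumes "tupset p S \<subseteq> I"
  shows "integrable (PiM I (\<lambda>_. gd)) (\<lambda>G. wig p G S) \<and> (\<integral>G. wig p G S \<partial>PiM I (\<lambda>_. gd)) = 0"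
proof -
  have int: "integrable (PiM I (\<lambda>_. gd)) (\<lambda>G. G (tup p S \<pi>))" if "\<pi> permutes {..<p}" for \<pi>
    using coord_integrable_pow[of "tup p S \<pi>" I 1] that assms by (auto simp: tupset_def)
  have z: "(\<integral>G. G (tup p S \<pi>) \<partial>PiM I (\<lambda>_. gd)) = 0" if "\<pi> permutes {..<p}" for \<pi>
    using coord_integral_pow[of "tup p S \<pi>" I 1] gd_integral_x that assms by (auto simp: tupset_def)
  have i: "integrable (PiM I (\<lambda>_. gd)) (\<lambda>G. \<Sum>\<pi> | \<pi> permutes {..<p}. G (tup p S \<pi>))"
    by (rule Bochner_Integration.integrable_sum) (simp add: int)
  have "(\<integral>G. (\<Sum>\<pi> | \<pi> permutes {..<p}. G (tup p S \<pi>)) \<partial>PiM I (\<lambda>_. gd)) = 0"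
    by (subst Bochner_Integration.integral_sum) (simp_all add: int z)
  note s0 = this
  show ?thesis unfolding wig_tup
  proof
    show "integrable (PiM I (\<lambda>_. gd)) (\<lambda>G. 1 / sqrt (fact p) * (\<Sum>\<pi> | \<pi> permutes {..<p}. G (tup p S \<pi>)))"
      by (rule integrable_mult_right[OF i])
    show "(\<integral>G. 1 / sqrt (fact p) * (\<Sum>\<pi> | \<pi> permutes {..<p}. G (tup p S \<pi>)) \<partial>PiM I (\<lambda>_. gd)) = 0"
      using s0 by (simp only: integral_mult_right_zero mult_zero_right)
  qed
qed

lemma wig_sq:
  assumes "tupset p S \<subseteq> I" "size S = p" "distinct (sorted_list_of_multiset S)"
  shows "integrable (PiM I (\<lambda>_. gd)) (\<lambda>G. (wig p G S)\<^sup>2) \<and> (\<integral>G. (wig p G S)\<^sup>2 \<partial>PiM I (\<lambda>_. gd)) = 1"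
proof -
  define Perms where "Perms = {\<pi>. \<pi> permutes {..<p}}"
  define c :: real where "c = 1 / sqrt (fact p)"
  have fin: "finite Perms" unfolding Perms_def by (rule finite_permutations) simp
  have card: "card Perms = fact p" unfolding Perms_def by (rule card_permutations) simp_all
  have eq: "(wig p G S)\<^sup>2 = (c * c) * (\<Sum>\<pi>\<in>Perms. \<Sum>\<sigma>\<in>Perms. G (tup p S \<pi>) * G (tup p S \<sigma>))" for G
  proof -
    have "(wig p G S)\<^sup>2 = (c * (\<Sum>\<pi>\<in>Perms. G (tup p S \<pi>))) * (c * (\<Sum>\<pi>\<in>Perms. G (tup p S \<pi>)))"
      by (simp only: wig_tup c_def Perms_def power2_eq_square)
    also have "\<dots> = (c * c) * ((\<Sum>\<pi>\<in>Perms. G (tup p S \<pi>)) * (\<Sum>\<sigma>\<in>Perms. G (tup p S \<sigma>)))"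
      by (simp only: mult_ac)
    also have "(\<Sum>\<pi>\<in>Perms. G (tup p S \<pi>)) * (\<Sum>\<sigma>\<in>Perms. G (tup p S \<sigma>)) =
        (\<Sum>\<pi>\<in>Perms. \<Sum>\<sigma>\<in>Perms. G (tup p S \<pi>) * G (tup p S \<sigma>))"
      by (rule sum_product)
    finally show ?thesis .
  qed
  have mem: "tup p S \<pi> \<in> I" if "\<pi> \<in> Perms" for \<pi> using assms(1) that by (auto simp: tupset_def Perms_def)
  have ip: "integrable (PiM I (\<lambda>_. gd)) (\<lambda>G. G (tup p S \<pi>) * G (tup p S \<sigma>)) \<and>
     (\<integral>G. G (tup p S \<pi>) * G (tup p S \<sigma>) \<partial>PiM I (\<lambda>_. gd)) = (if \<pi> = \<sigma> then 1 else 0)"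
    if "\<pi> \<in> Perms" "\<sigma> \<in> Perms" for \<pi> \<sigma>
  proof -
    have "tup p S \<pi> = tup p S \<sigma> \<longleftrightarrow> \<pi> = \<sigma>"
      using tup_inj[OF assms(2,3)] that by (auto simp: Perms_def)
    then show ?thesis using coord_prod[OF mem[OF that(1)] mem[OF that(2)]] by simp
  qed
  have iA: "integrable (PiM I (\<lambda>_. gd)) (\<lambda>G. (c * c) * (\<Sum>\<pi>\<in>Perms. \<Sum>\<sigma>\<in>Perms. G (tup p S \<pi>) * G (tup p S \<sigma>)))"
    using ip by (intro integrable_mult_right Bochner_Integration.integrable_sum) auto
  have "(\<integral>G. (wig p G S)\<^sup>2 \<partial>PiM I (\<lambda>_. gd)) =
      (\<integral>G. (c * c) * (\<Sum>\<pi>\<in>Perms. \<Sum>\<sigma>\<in>Perms. G (tup p S \<pi>) * G (tup p S \<sigma>)) \<partial>PiM I (\<lambda>_. gd))"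
    by (simp only: eq)
  also have "\<dots> = (c * c) * (\<Sum>\<pi>\<in>Perms. \<Sum>\<sigma>\<in>Perms. (if \<pi> = \<sigma> then 1 else 0))"
    using ip by (simp add: Bochner_Integration.integral_sum Bochner_Integration.integrable_sum)
  also have "(\<Sum>\<pi>\<in>Perms. \<Sum>\<sigma>\<in>Perms. (if \<pi> = \<sigma> then 1 else 0 :: real)) = real (card Perms)"
    using fin by simp
  also have "(c * c) * real (card Perms) = 1"
    unfolding c_def card by simp
  finally show ?thesis using iA by (simp only: eq)
qed

lemma factor_lin:
  assumes "tupset p S \<subseteq> I"
  shows "integrable (PiM I (\<lambda>_. gd)) (\<lambda>G. a + wig p G S) \<and> (\<integral>G. a + wig p G S \<partial>PiM I (\<lambda>_. gd)) = a"
proof -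
  interpret P: prob_space "PiM I (\<lambda>_. gd)" by (rule prob_PiM_gd)
  have i: "integrable (PiM I (\<lambda>_. gd)) (\<lambda>G. wig p G S)" and z: "(\<integral>G. wig p G S \<partial>PiM I (\<lambda>_. gd)) = 0"
    using wig_int[OF assms] by auto
  have ic: "integrable (PiM I (\<lambda>_. gd)) (\<lambda>G. a)" by simp
  show ?thesis using Bochner_Integration.integrable_add[OF ic i] Bochner_Integration.integral_add[OF ic i] z P.prob_space by simp
qed

lemma factor_sq:
  assumes "tupset p S \<subseteq> I" "size S = p" "distinct (sorted_list_of_multiset S)"
  shows "integrable (PiM I (\<lambda>_. gd)) (\<lambda>G. (a + wig p G S)\<^sup>2 - 1) \<and>
         (\<integral>G. (a + wig p G S)\<^sup>2 - 1 \<partial>PiM I (\<lambda>_. gd)) = a\<^sup>2"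
proof -
  interpret P: prob_space "PiM I (\<lambda>_. gd)" by (rule prob_PiM_gd)
  have eq: "(a + wig p G S)\<^sup>2 - 1 = (a\<^sup>2 - 1) + (2 * a) * wig p G S + (wig p G S)\<^sup>2" for G
    by (simp add: power2_eq_square algebra_simps)
  have i: "integrable (PiM I (\<lambda>_. gd)) (\<lambda>G. wig p G S)" and z: "(\<integral>G. wig p G S \<partial>PiM I (\<lambda>_. gd)) = 0"
    using wig_int[OF assms(1)] by auto
  have i2: "integrable (PiM I (\<lambda>_. gd)) (\<lambda>G. (wig p G S)\<^sup>2)" and z2: "(\<integral>G. (wig p G S)\<^sup>2 \<partial>PiM I (\<lambda>_. gd)) = 1"
    using wig_sq[OF assms] by auto
  have ic: "integrable (PiM I (\<lambda>_. gd)) (\<lambda>G. a\<^sup>2 - 1)" by simp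
  have i1: "integrable (PiM I (\<lambda>_. gd)) (\<lambda>G. (2 * a) * wig p G S)" by (rule integrable_mult_right[OF i])
  have i12: "integrable (PiM I (\<lambda>_. gd)) (\<lambda>G. (a\<^sup>2 - 1) + (2 * a) * wig p G S)"
    using ic i1 by (intro Bochner_Integration.integrable_add)
  note i3 = Bochner_Integration.integrable_add[OF i12 i2]
  have "(\<integral>G. (a\<^sup>2 - 1) + (2 * a) * wig p G S + (wig p G S)\<^sup>2 \<partial>PiM I (\<lambda>_. gd)) =
        (\<integral>G. (a\<^sup>2 - 1) + (2 * a) * wig p G S \<partial>PiM I (\<lambda>_. gd)) + 1"
    by (subst Bochner_Integration.integral_add[OF i12 i2]) (simp add: z2)
  also have "(\<integral>G. (a\<^sup>2 - 1) + (2 * a) * wig p G S \<partial>PiM I (\<lambda>_. gd)) = a\<^sup>2 - 1"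
    by (subst Bochner_Integration.integral_add[OF ic i1]) (simp add: z P.prob_space)
  finally show ?thesis unfolding eq using i3 by simp
qed

lemma distinct_sorted_mset_set:
  "finite A \<Longrightarrow> distinct (sorted_list_of_multiset (mset_set A))"
  by simp

lemma block_indep:
  fixes K :: "'k set" and J :: "'k \<Rightarrow> (nat \<Rightarrow> nat) set" and g :: "'k \<Rightarrow> ((nat \<Rightarrow> nat) \<Rightarrow> real) \<Rightarrow> real"
  assumes "finite K" "\<And>k. k \<in> K \<Longrightarrow> J k \<subseteq> I" "disjoint_family_on J K"
    "\<And>k. k \<in> K \<Longrightarrow> g k \<in> borel_measurable (PiM (J k) (\<lambda>_. gd))"
    "\<And>k. k \<in> K \<Longrightarrow> integrable (PiM I (\<lambda>_. gd)) (\<lambda>G. g k (restrict G (J k)))"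
  shows "integrable (PiM I (\<lambda>_. gd)) (\<lambda>G. \<Prod>k\<in>K. g k (restrict G (J k))) \<and>
    (\<integral>G. (\<Prod>k\<in>K. g k (restrict G (J k))) \<partial>PiM I (\<lambda>_. gd)) =
    (\<Prod>k\<in>K. \<integral>G. g k (restrict G (J k)) \<partial>PiM I (\<lambda>_. gd))"
proof -
  interpret P: prob_space "PiM I (\<lambda>_. gd)" by (rule prob_PiM_gd)
  have ind0: "P.indep_vars (\<lambda>k. PiM (J k) (\<lambda>_. gd)) (\<lambda>k \<omega>. restrict (\<lambda>i. \<omega> i) (J k)) K"
    by (rule P.indep_vars_restrict[OF coord_indep]) (use assms in auto)
  have ind: "P.indep_vars (\<lambda>_. borel) (\<lambda>k \<omega>. g k (restrict (\<lambda>i. \<omega> i) (J k))) K"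
    by (rule P.indep_vars_compose2[OF ind0]) (rule assms(4))
  then have ind': "P.indep_vars (\<lambda>_. borel) (\<lambda>k \<omega>. g k (restrict \<omega> (J k))) K" by simp
  show ?thesis
    using P.indep_vars_integrable[OF assms(1) ind' assms(5)] P.indep_vars_lebesgue_integral[OF assms(1) ind' assms(5)]
    by simp
qed

lemma per_label:
  assumes p1: "p \<ge> 1" and mg: "multigraph nv b ends" and rg: "regular p nv b ends"
    and iD: "i \<in> dist_labelings n b"
  shows "integrable (gauss_space p n) (\<lambda>G.
      (\<Prod>v\<in>{..<nv} - frob_vertices p nv b ends. T (star_labels b ends i v) + wig p G (star_labels b ends i v)) *
      (\<Prod>P\<in>frob_pairs p nv b ends. (T (pair_labels b ends i P) + wig p G (pair_labels b ends i P))\<^sup>2 - 1)) \<and>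
    (\<integral>G. (\<Prod>v\<in>{..<nv} - frob_vertices p nv b ends. T (star_labels b ends i v) + wig p G (star_labels b ends i v)) *
      (\<Prod>P\<in>frob_pairs p nv b ends. (T (pair_labels b ends i P) + wig p G (pair_labels b ends i P))\<^sup>2 - 1)
      \<partial>gauss_space p n) = (\<Prod>v<nv. T (star_labels b ends i v))"
proof -
  define S where "S v = star_labels b ends i v" for v
  define PL where "PL P = pair_labels b ends i P" for P
  define U where "U = frob_vertices p nv b ends"
  define FP where "FP = frob_pairs p nv b ends"
  define V where "V = {..<nv} - U"
  define I where "I = tuples p n"
  have inj: "inj_on i {..<b}" and iE: "i \<in> {..<b} \<rightarrow>\<^sub>E {..<n}"
    using iD by (auto simp: dist_labelings_def)
  have finFP: "finite FP" unfolding FP_def by (rule finite_frob_pairs)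
  have UFP: "U = \<Union>FP" unfolding U_def FP_def frob_vertices_def ..
  define rep where "rep P = (SOME u. \<exists>v. P = {u, v} \<and> frob_pair p nv b ends u v)" for P
  have rep: "\<exists>v. P = {rep P, v} \<and> frob_pair p nv b ends (rep P) v" if "P \<in> FP" for P
  proof -
    have "\<exists>u v. P = {u, v} \<and> frob_pair p nv b ends u v" using that unfolding FP_def frob_pairs_def by auto
    then show ?thesis unfolding rep_def by (rule someI_ex)
  qed
  have PL_rep: "PL P = S (rep P)" if P: "P \<in> FP" for P
  proof -
    obtain v where "P = {rep P, v}" "frob_pair p nv b ends (rep P) v" using rep[OF P] by blast
    then show ?thesis using pair_labels_eq[of p nv b ends "rep P" v i] unfolding PL_def S_def by simp
  qed
  have rep_U: "rep P \<in> U" if "P \<in> FP" for P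
    using rep[OF that] that unfolding UFP by auto
  have U_lt: "U \<subseteq> {..<nv}" unfolding U_def by (rule frob_vertices_sub)
  have key: "frob_pair p nv b ends u v" if "u \<noteq> v" "u < nv" "v < nv" "S u = S v" for u v
  proof -
    have "\<forall>e<b. inc ends e u = inc ends e v" using star_eq_inc[OF inj] that(4) unfolding S_def by blast
    then show ?thesis by (rule frob_of_inc[OF that(1-3) rg])
  qed
  have frobU: "u \<in> U" "v \<in> U" if "frob_pair p nv b ends u v" for u v
    using frob_pairI[OF that] unfolding UFP FP_def by auto
  define K where "K = Inl ` V \<union> Inr ` FP"
  define r where "r k = (case k of Inl v \<Rightarrow> v | Inr P \<Rightarrow> rep P)" for k
  define SK where "SK k = (case k of Inl v \<Rightarrow> S v | Inr P \<Rightarrow> PL P)" for k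
  have SK_r: "SK k = S (r k)" if "k \<in> K" for k
    using that PL_rep unfolding K_def SK_def r_def by auto
  have rep_lt: "rep P < nv" if "P \<in> FP" for P
    using rep_U[OF that] U_lt by blast
  have r_lt: "r k < nv" if "k \<in> K" for k
    using that rep_lt unfolding K_def r_def V_def by auto
  have sizeK: "size (SK k) = p" if "k \<in> K" for k
    using SK_r[OF that] size_star[OF rg r_lt[OF that]] unfolding S_def by simp
  have setK: "set_mset (SK k) \<subseteq> {..<n}" if "k \<in> K" for k
    using SK_r[OF that] set_star[OF iE] unfolding S_def by auto
  define J where "J k = tupset p (SK k)" for k
  have JI: "J k \<subseteq> I" if "k \<in> K" for k
    unfolding J_def I_def by (rule tupset_sub[OF sizeK[OF that] setK[OF that]])
  have r_inj: "r k1 \<noteq> r k2" if h: "k1 \<in> K" "k2 \<in> K" "k1 \<noteq> k2" for k1 k2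
  proof -
    consider (ll) v w where "k1 = Inl v" "k2 = Inl w" "v \<in> V" "w \<in> V"
      | (lr) v Q where "k1 = Inl v" "k2 = Inr Q" "v \<in> V" "Q \<in> FP"
      | (rl) P w where "k1 = Inr P" "k2 = Inl w" "P \<in> FP" "w \<in> V"
      | (rr) P Q where "k1 = Inr P" "k2 = Inr Q" "P \<in> FP" "Q \<in> FP"
      using h(1,2) unfolding K_def by (elim UnE imageE) blast+
    then show ?thesis
    proof cases
      case ll then show ?thesis using h(3) by (simp add: r_def)
    next
      case lr then show ?thesis using rep_U[of Q] unfolding r_def V_def by auto
    next
      case rl then show ?thesis using rep_U[of P] unfolding r_def V_def by auto
    next
      case rr
      have "rep P \<in> P" "rep Q \<in> Q" using rep[OF rr(3)] rep[OF rr(4)] by auto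
      then show ?thesis using rr h(3) frob_pairs_disj[OF p1, of P nv b ends Q "rep P"]
        unfolding r_def FP_def by auto
    qed
  qed
  have SK_ne: "SK k1 \<noteq> SK k2" if h: "k1 \<in> K" "k2 \<in> K" "k1 \<noteq> k2" for k1 k2
  proof
    assume eq: "SK k1 = SK k2"
    have fp: "frob_pair p nv b ends (r k1) (r k2)"
      using key[OF r_inj[OF h] r_lt[OF h(1)] r_lt[OF h(2)]] eq SK_r h by simp
    have "r k1 \<in> U" "r k2 \<in> U" using frobU[OF fp] by auto
    then obtain P Q where PQ: "k1 = Inr P" "k2 = Inr Q" "P \<in> FP" "Q \<in> FP"
      using h(1,2) unfolding K_def V_def r_def by auto
    have "{r k1, r k2} \<in> FP" using frob_pairI[OF fp] unfolding FP_def .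
    moreover have "rep P \<in> P" "rep Q \<in> Q" using rep[OF PQ(3)] rep[OF PQ(4)] by auto
    moreover have "r k1 = rep P" "r k2 = rep Q" using PQ unfolding r_def by simp_all
    ultimately have "P = {r k1, r k2}" "Q = {r k1, r k2}"
      using frob_pairs_disj[OF p1, of P nv b ends "{r k1, r k2}" "r k1"]
        frob_pairs_disj[OF p1, of Q nv b ends "{r k1, r k2}" "r k2"] PQ(3,4)
      unfolding FP_def by auto
    then have "P = Q" by (metis (no_types))
    then show False using PQ(1,2) h(3) by simp
  qed
  have disj: "disjoint_family_on J K"
    unfolding disjoint_family_on_def
  proof (intro ballI impI)
    fix k1 k2 assume "k1 \<in> K" "k2 \<in> K" "k1 \<noteq> k2"
    then show "J k1 \<inter> J k2 = {}"
      unfolding J_def by (intro tupset_disj sizeK SK_ne)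
  qed
  define h where "h k G = (case k of Inl v \<Rightarrow> T (S v) + wig p G (S v) | Inr P \<Rightarrow> (T (PL P) + wig p G (PL P))\<^sup>2 - 1)" for k G
  have hr: "h k (restrict G (J k)) = h k G" for k G
    unfolding h_def J_def SK_def by (cases k) (simp_all add: wig_restrict)
  have hmeas: "h k \<in> borel_measurable (PiM (J k) (\<lambda>_. gd))" for k
  proof (cases k)
    case (Inl v)
    have "(\<lambda>H. wig p H (S v)) \<in> borel_measurable (PiM (J k) (\<lambda>_. gd))"
      using wig_meas[of p "S v"] Inl unfolding J_def SK_def by simp
    then show ?thesis unfolding h_def Inl by simp
  next
    case (Inr P)
    have "(\<lambda>H. wig p H (PL P)) \<in> borel_measurable (PiM (J k) (\<lambda>_. gd))"
      using wig_meas[of p "PL P"] Inr unfolding J_def SK_def by simp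
    then show ?thesis unfolding h_def Inr by simp
  qed
  define c where "c k = (case k of Inl v \<Rightarrow> T (S v) | Inr P \<Rightarrow> (T (PL P))\<^sup>2)" for k
  have hint: "integrable (PiM I (\<lambda>_. gd)) (h k) \<and> (\<integral>G. h k G \<partial>PiM I (\<lambda>_. gd)) = c k" if "k \<in> K" for k
  proof (cases k)
    case (Inl v)
    have "tupset p (S v) \<subseteq> I" using JI[OF that] Inl unfolding J_def SK_def by simp
    from factor_lin[OF this, of "T (S v)"] show ?thesis unfolding h_def c_def Inl by simp
  next
    case (Inr P)
    then have P: "P \<in> FP" using that unfolding K_def by auto
    have sub: "tupset p (PL P) \<subseteq> I" using JI[OF that] Inr unfolding J_def SK_def by simp
    have sz: "size (PL P) = p" using sizeK[OF that] Inr unfolding SK_def by simp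
    have "distinct (sorted_list_of_multiset (PL P))"
    proof -
      define E where "E = {e. e < b \<and> fst (ends e) \<in> P \<and> snd (ends e) \<in> P}"
      have "E \<subseteq> {..<b}" unfolding E_def by auto
      then have "PL P = mset_set (i ` E)"
        unfolding PL_def pair_labels_def E_def[symmetric]
        by (intro image_mset_mset_set inj_on_subset[OF inj])
      then show ?thesis by (simp add: distinct_sorted_mset_set E_def)
    qed
    from factor_sq[OF sub sz this, of "T (PL P)"] show ?thesis unfolding h_def c_def Inr by simp
  qed
  have prodK: "(\<Prod>k\<in>K. f k) = (\<Prod>v\<in>V. f (Inl v)) * (\<Prod>P\<in>FP. f (Inr P))" for f :: "nat + nat set \<Rightarrow> real"
  proof -
    have "finite V" unfolding V_def by simp
    then have "(\<Prod>k\<in>K. f k) = (\<Prod>k\<in>Inl ` V. f k) * (\<Prod>k\<in>Inr ` FP. f k)"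
      unfolding K_def using finFP by (intro prod.union_disjoint) auto
    also have "\<dots> = (\<Prod>v\<in>V. f (Inl v)) * (\<Prod>P\<in>FP. f (Inr P))"
      by (simp add: prod.reindex)
    finally show ?thesis .
  qed
  have finK: "finite K" unfolding K_def V_def using finFP by simp
  have B: "integrable (PiM I (\<lambda>_. gd)) (\<lambda>G. \<Prod>k\<in>K. h k (restrict G (J k))) \<and>
    (\<integral>G. (\<Prod>k\<in>K. h k (restrict G (J k))) \<partial>PiM I (\<lambda>_. gd)) =
    (\<Prod>k\<in>K. \<integral>G. h k (restrict G (J k)) \<partial>PiM I (\<lambda>_. gd))"
    by (rule block_indep[OF finK JI disj hmeas]) (use hint hr in auto)
  have integrand: "(\<Prod>k\<in>K. h k (restrict G (J k))) =
      (\<Prod>v\<in>{..<nv} - frob_vertices p nv b ends. T (star_labels b ends i v) + wig p G (star_labels b ends i v)) *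
      (\<Prod>P\<in>frob_pairs p nv b ends. (T (pair_labels b ends i P) + wig p G (pair_labels b ends i P))\<^sup>2 - 1)" for G
    unfolding hr prodK by (simp add: h_def V_def U_def FP_def S_def PL_def)
  have vals: "(\<Prod>k\<in>K. \<integral>G. h k (restrict G (J k)) \<partial>PiM I (\<lambda>_. gd)) = (\<Prod>v\<in>V. T (S v)) * (\<Prod>P\<in>FP. (T (PL P))\<^sup>2)"
  proof -
    have "(\<Prod>k\<in>K. \<integral>G. h k (restrict G (J k)) \<partial>PiM I (\<lambda>_. gd)) = (\<Prod>k\<in>K. c k)"
      using hint by (intro prod.cong) (auto simp: hr)
    then show ?thesis unfolding prodK by (simp add: c_def)
  qed
  have final: "(\<Prod>v\<in>V. T (S v)) * (\<Prod>P\<in>FP. (T (PL P))\<^sup>2) = (\<Prod>v<nv. T (S v))"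
  proof -
    have "(\<Prod>v<nv. T (S v)) = (\<Prod>v\<in>V. T (S v)) * (\<Prod>v\<in>U. T (S v))"
      unfolding V_def by (rule prod.subset_diff[OF U_lt]) simp
    also have "(\<Prod>v\<in>U. T (S v)) = (\<Prod>P\<in>FP. \<Prod>v\<in>P. T (S v))"
    proof -
      have "\<forall>A\<in>FP. finite A" unfolding FP_def frob_pairs_def by auto
      moreover have "\<forall>A\<in>FP. \<forall>B\<in>FP. A \<noteq> B \<longrightarrow> A \<inter> B = {}"
      proof (intro ballI impI)
        fix A B assume AB: "A \<in> FP" "B \<in> FP" "A \<noteq> B"
        show "A \<inter> B = {}"
        proof (rule ccontr)
          assume "A \<inter> B \<noteq> {}"
          then obtain x where "x \<in> A" "x \<in> B" by blast
          then have "A = B" using frob_pairs_disj[OF p1, of A nv b ends B x] AB(1,2) unfolding FP_def by simp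
          then show False using AB(3) by simp
        qed
      qed
      ultimately show ?thesis unfolding UFP by (simp add: prod.Union_disjoint)
    qed
    also have "(\<Prod>P\<in>FP. \<Prod>v\<in>P. T (S v)) = (\<Prod>P\<in>FP. (T (PL P))\<^sup>2)"
    proof (rule prod.cong[OF refl])
      fix P assume P: "P \<in> FP"
      obtain w where w: "P = {rep P, w}" "frob_pair p nv b ends (rep P) w" using rep[OF P] by auto
      define u where "u = rep P"
      have uw: "u \<noteq> w" using w(2) unfolding frob_pair_def u_def by simp
      have Sw: "S w = S u" using star_eq_frob[OF w(2)] unfolding S_def u_def by simp
      have PLu: "PL P = S u" using PL_rep[OF P] unfolding u_def .
      have Pu: "P = {u, w}" using w(1) unfolding u_def .
      have "(\<Prod>v\<in>P. T (S v)) = (\<Prod>v\<in>{u, w}. T (S v))" by (simp only: Pu)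
      also have "\<dots> = T (S u) * T (S w)" using uw by simp
      finally show "(\<Prod>v\<in>P. T (S v)) = (T (PL P))\<^sup>2"
        by (simp only: Sw PLu power2_eq_square)
    qed
    finally show ?thesis by simp
  qed
  show ?thesis
    using B unfolding integrand vals final
    by (simp add: gauss_space_def I_def S_def)
qed

theorem proposition4p6:
  fixes p n nv b :: nat and ends :: "nat \<Rightarrow> nat \<times> nat" and T :: "nat multiset \<Rightarrow> real"
  assumes "p \<ge> 1"
    and "multigraph nv b ends"
    and "regular p nv b ends"
  shows "integrable (gauss_space p n) (\<lambda>G. m_c p n nv b ends (\<lambda>S. T S + wig p G S))
     \<and> (\<integral>G. m_c p n nv b ends (\<lambda>S. T S + wig p G S) \<partial>gauss_space p n) = m_inj n nv b ends T"
proof -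
  define F where "F i G = (\<Prod>v\<in>{..<nv} - frob_vertices p nv b ends. T (star_labels b ends i v) + wig p G (star_labels b ends i v)) *
      (\<Prod>P\<in>frob_pairs p nv b ends. (T (pair_labels b ends i P) + wig p G (pair_labels b ends i P))\<^sup>2 - 1)" for i G
  have pl: "integrable (gauss_space p n) (F i) \<and> (\<integral>G. F i G \<partial>gauss_space p n) = (\<Prod>v<nv. T (star_labels b ends i v))"
    if "i \<in> dist_labelings n b" for i
    unfolding F_def by (rule per_label[OF assms that])
  have mc: "m_c p n nv b ends (\<lambda>S. T S + wig p G S) = (\<Sum>i\<in>dist_labelings n b. F i G)" for G
    unfolding m_c_def F_def ..
  have int: "integrable (gauss_space p n) (\<lambda>G. \<Sum>i\<in>dist_labelings n b. F i G)"
    by (rule Bochner_Integration.integrable_sum) (use pl in blast)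
  have "(\<integral>G. (\<Sum>i\<in>dist_labelings n b. F i G) \<partial>gauss_space p n) = (\<Sum>i\<in>dist_labelings n b. \<integral>G. F i G \<partial>gauss_space p n)"
    by (rule Bochner_Integration.integral_sum) (use pl in blast)
  also have "\<dots> = (\<Sum>i\<in>dist_labelings n b. \<Prod>v<nv. T (star_labels b ends i v))"
    by (rule sum.cong) (use pl in auto)
  also have "\<dots> = m_inj n nv b ends T" unfolding m_inj_def ..
  finally show ?thesis unfolding mc using int by simp
qed

end
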